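(* Let $(\mathcal{A},\mathcal{E})$ be a finite, essentially small exact category. Then: (GR4) for all $X,Y\in\mathrm{ind}\mathcal{A}$, $\mu_\mathcal{E}(X)\lll\mu_\mathcal{E}(Y)$ or $\mu_\mathcal{E}(Y)\lll\mu_\mathcal{E}(X)$; (GR5) for every $n\in\mathbb{N}$ the set $\{\mu_\mathcal{E}(X) : X\in\mathrm{ind}\mathcal{A},\ l_\mathcal{E}(X)\le n\}$ is finite; (GR6) $X\in\mathrm{ind}\mathcal{A}$ is $\mathcal{E}$-simple if and only if $\mu_\mathcal{E}(X)\lll\mu_\mathcal{E}(Y)$ for all $Y\in\mathrm{ind}\mathcal{A}$.
   Context: $(\mathcal{A},\mathcal{E})$ is a Quillen exact category; admissible monics are morphisms $i$ with $(i,d)\in\mathcal{E}$ for some $d$. $X\subsetneq_\mathcal{E}Y$ means there is an admissible monic $X\to Y$ that is not an isomorphism. A nonzero object $S$ is $\mathcal{E}$-simple if every object $A$ admitting an admissible monic $A\to S$ is zero or isomorphic to $S$. The $\mathcal{E}$-length $l_\mathcal{E}(X)$ is the supremum of all $n$ such that there is a chain $0=X_0\to\cdots\to X_n=X$ of admissible monics none of which is an isomorphism; $(\mathcal{A},\mathcal{E})$ is finite if $l_\mathcal{E}(X)<\infty$ for all $X$. $\mathrm{ind}\mathcal{A}$ is the set of isomorphism classes of indecomposable objects. $\mathfrak{S}(\mathbb{N})$ is the set of finite nonempty sequences of natural numbers, totally ordered by: $x\lll y$ iff $x=y$, or $x$ is a proper prefix of $y$, or at the first index $i$ where $x_i\neq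 y_i$ (both defined) one has $x_i>y_i$. For indecomposable $X$, $\mu_\mathcal{E}(X)$ is the $\lll$-maximum of $(l_\mathcal{E}(X_1),\dots,l_\mathcal{E}(X_n))$ over all chains $X_1\subsetneq_\mathcal{E}\cdots\subsetneq_\mathcal{E}X_n=X$ ($n\ge1$) with all $X_i$ indecomposable. *)

theory Defs
  imports Main "HOL-Library.Extended_Nat"
begin

text \<open>Objects have type 'o, morphisms type 'm.  cmp g f is the composite g after f.
  The preadditive structure (addition, zero, negation of morphisms) is part of the data.\<close>

record ('o,'m) addcat =
  Obj  :: "'o set"
  Hom  :: "'o \<Rightarrow> 'o \<Rightarrow> 'm set"
  cmp  :: "'m \<Rightarrow> 'm \<Rightarrow> 'm"
  idm  :: "'o \<Rightarrow> 'm"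
  padd :: "'m \<Rightarrow> 'm \<Rightarrow> 'm"
  pzero :: "'o \<Rightarrow> 'o \<Rightarrow> 'm"
  pneg :: "'m \<Rightarrow> 'm"

definition is_category :: "('o,'m) addcat \<Rightarrow> bool" where
  "is_category C \<longleftrightarrow>
     (\<forall>X\<in>Obj C. idm C X \<in> Hom C X X) \<and>
     (\<forall>X\<in>Obj C. \<forall>Y\<in>Obj C. \<forall>Z\<in>Obj C. \<forall>f\<in>Hom C X Y. \<forall>g\<in>Hom C Y Z. cmp C g f \<in> Hom C X Z) \<and>
     (\<forall>W\<in>Obj C. \<forall>X\<in>Obj C. \<forall>Y\<in>Obj C. \<forall>Z\<in>Obj C.
        \<forall>f\<in>Hom C W X. \<forall>g\<in>Hom C X Y. \<forall>h\<in>Hom C Y Z.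
          cmp C h (cmp C g f) = cmp C (cmp C h g) f) \<and>
     (\<forall>X\<in>Obj C. \<forall>Y\<in>Obj C. \<forall>f\<in>Hom C X Y.
          cmp C f (idm C X) = f \<and> cmp C (idm C Y) f = f)"

definition is_preadditive :: "('o,'m) addcat \<Rightarrow> bool" where
  "is_preadditive C \<longleftrightarrow> is_category C \<and>
     (\<forall>X\<in>Obj C. \<forall>Y\<in>Obj C.
        pzero C X Y \<in> Hom C X Y \<and>
        (\<forall>f\<in>Hom C X Y. \<forall>g\<in>Hom C X Y. padd C f g \<in> Hom C X Y) \<and>
        (\<forall>f\<in>Hom C X Y. pneg C f \<in> Hom C X Y) \<and>
        (\<forall>f\<in>Hom C X Y. \<forall>g\<in>Hom C X Y. \<forall>h\<in>Hom C X Y.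
            padd C (padd C f g) h = padd C f (padd C g h)) \<and>
        (\<forall>f\<in>Hom C X Y. \<forall>g\<in>Hom C X Y. padd C f g = padd C g f) \<and>
        (\<forall>f\<in>Hom C X Y. padd C f (pzero C X Y) = f) \<and>
        (\<forall>f\<in>Hom C X Y. padd C f (pneg C f) = pzero C X Y)) \<and>
     (\<forall>X\<in>Obj C. \<forall>Y\<in>Obj C. \<forall>Z\<in>Obj C.
        (\<forall>f\<in>Hom C X Y. \<forall>g\<in>Hom C Y Z. \<forall>g'\<in>Hom C Y Z.
            cmp C (padd C g g') f = padd C (cmp C g f) (cmp C g' f)) \<and>
        (\<forall>f\<in>Hom C X Y. \<forall>f'\<in>Hom C X Y. \<forall>g\<in>Hom C Y Z.
            cmp C g (padd C f f') = padd C (cmp C g f) (cmp C g f')))"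

definition is_zero_obj :: "('o,'m) addcat \<Rightarrow> 'o \<Rightarrow> bool" where
  "is_zero_obj C Z \<longleftrightarrow> Z \<in> Obj C \<and>
     (\<forall>X\<in>Obj C. (\<exists>!f. f \<in> Hom C Z X) \<and> (\<exists>!f. f \<in> Hom C X Z))"

definition is_biproduct :: "('o,'m) addcat \<Rightarrow> 'o \<Rightarrow> 'o \<Rightarrow> 'o \<Rightarrow> 'm \<Rightarrow> 'm \<Rightarrow> 'm \<Rightarrow> 'm \<Rightarrow> bool" where
  "is_biproduct C X1 X2 B i1 i2 p1 p2 \<longleftrightarrow>
     X1 \<in> Obj C \<and> X2 \<in> Obj C \<and> B \<in> Obj C \<and>
     i1 \<in> Hom C X1 B \<and> i2 \<in> Hom C X2 B \<and> p1 \<in> Hom C B X1 \<and> p2 \<in> Hom C B X2 \<and>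
     cmp C p1 i1 = idm C X1 \<and> cmp C p2 i2 = idm C X2 \<and>
     padd C (cmp C i1 p1) (cmp C i2 p2) = idm C B"

definition is_additive :: "('o,'m) addcat \<Rightarrow> bool" where
  "is_additive C \<longleftrightarrow> is_preadditive C \<and> (\<exists>Z. is_zero_obj C Z) \<and>
     (\<forall>X1\<in>Obj C. \<forall>X2\<in>Obj C. \<exists>B i1 i2 p1 p2. is_biproduct C X1 X2 B i1 i2 p1 p2)"

definition is_iso :: "('o,'m) addcat \<Rightarrow> 'o \<Rightarrow> 'o \<Rightarrow> 'm \<Rightarrow> bool" where
  "is_iso C X Y f \<longleftrightarrow> X \<in> Obj C \<and> Y \<in> Obj C \<and> f \<in> Hom C X Y \<and>
     (\<exists>g\<in>Hom C Y X. cmp C g f = idm C X \<and> cmp C f g = idm C Y)"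

definition isomorphic :: "('o,'m) addcat \<Rightarrow> 'o \<Rightarrow> 'o \<Rightarrow> bool" where
  "isomorphic C X Y \<longleftrightarrow> (\<exists>f. is_iso C X Y f)"

definition is_kernel :: "('o,'m) addcat \<Rightarrow> 'o \<Rightarrow> 'o \<Rightarrow> 'o \<Rightarrow> 'm \<Rightarrow> 'm \<Rightarrow> bool" where
  "is_kernel C X Y Z i d \<longleftrightarrow>
     X \<in> Obj C \<and> Y \<in> Obj C \<and> Z \<in> Obj C \<and> i \<in> Hom C X Y \<and> d \<in> Hom C Y Z \<and>
     cmp C d i = pzero C X Z \<and>
     (\<forall>W\<in>Obj C. \<forall>g\<in>Hom C W Y. cmp C d g = pzero C W Z \<longrightarrow>
        (\<exists>h\<in>Hom C W X. cmp C i h = g \<and> (\<forall>h'\<in>Hom C W X. cmp C i h' = g \<longrightarrow> h' = h)))"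

definition is_cokernel :: "('o,'m) addcat \<Rightarrow> 'o \<Rightarrow> 'o \<Rightarrow> 'o \<Rightarrow> 'm \<Rightarrow> 'm \<Rightarrow> bool" where
  "is_cokernel C X Y Z i d \<longleftrightarrow>
     X \<in> Obj C \<and> Y \<in> Obj C \<and> Z \<in> Obj C \<and> i \<in> Hom C X Y \<and> d \<in> Hom C Y Z \<and>
     cmp C d i = pzero C X Z \<and>
     (\<forall>W\<in>Obj C. \<forall>g\<in>Hom C Y W. cmp C g i = pzero C X W \<longrightarrow>
        (\<exists>h\<in>Hom C Z W. cmp C h d = g \<and> (\<forall>h'\<in>Hom C Z W. cmp C h' d = g \<longrightarrow> h' = h)))"

definition is_kc_pair :: "('o,'m) addcat \<Rightarrow> 'o \<Rightarrow> 'o \<Rightarrow> 'o \<Rightarrow> 'm \<Rightarrow> 'm \<Rightarrow> bool" where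
  "is_kc_pair C X Y Z i d \<longleftrightarrow> is_kernel C X Y Z i d \<and> is_cokernel C X Y Z i d"

text \<open>A class of kernel-cokernel pairs: tuples (X, Y, Z, i, d) with i : X \<rightarrow> Y, d : Y \<rightarrow> Z.\<close>
type_synonym ('o,'m) conflations = "('o \<times> 'o \<times> 'o \<times> 'm \<times> 'm) set"

definition adm_monic :: "('o,'m) addcat \<Rightarrow> ('o,'m) conflations \<Rightarrow> 'o \<Rightarrow> 'o \<Rightarrow> 'm \<Rightarrow> bool" where
  "adm_monic C E X Y i \<longleftrightarrow> (\<exists>Z d. (X, Y, Z, i, d) \<in> E)"

definition adm_epic :: "('o,'m) addcat \<Rightarrow> ('o,'m) conflations \<Rightarrow> 'o \<Rightarrow> 'o \<Rightarrow> 'm \<Rightarrow> bool" where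
  "adm_epic C E Y Z d \<longleftrightarrow> (\<exists>X i. (X, Y, Z, i, d) \<in> E)"

text \<open>Quillen's axioms (in the form of Buehler, Exact categories, Def. 2.1).\<close>
definition is_exact_category :: "('o,'m) addcat \<Rightarrow> ('o,'m) conflations \<Rightarrow> bool" where
  "is_exact_category C E \<longleftrightarrow> is_additive C \<and>
     \<comment> \<open>E consists of kernel-cokernel pairs\<close>
     (\<forall>(X, Y, Z, i, d) \<in> E. is_kc_pair C X Y Z i d) \<and>
     \<comment> \<open>E is closed under isomorphisms of kernel-cokernel pairs\<close>
     (\<forall>(X, Y, Z, i, d) \<in> E. \<forall>X' Y' Z' i' d' a b c.
        is_kc_pair C X' Y' Z' i' d' \<and> is_iso C X X' a \<and> is_iso C Y Y' b \<and> is_iso C Z Z' c \<and>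
        cmp C b i = cmp C i' a \<and> cmp C c d = cmp C d' b \<longrightarrow> (X', Y', Z', i', d') \<in> E) \<and>
     \<comment> \<open>[E0], [E0op]\<close>
     (\<forall>X\<in>Obj C. adm_monic C E X X (idm C X)) \<and>
     (\<forall>X\<in>Obj C. adm_epic C E X X (idm C X)) \<and>
     \<comment> \<open>[E1], [E1op]\<close>
     (\<forall>X Y Z f g. adm_monic C E X Y f \<and> adm_monic C E Y Z g \<longrightarrow> adm_monic C E X Z (cmp C g f)) \<and>
     (\<forall>X Y Z f g. adm_epic C E X Y f \<and> adm_epic C E Y Z g \<longrightarrow> adm_epic C E X Z (cmp C g f)) \<and>
     \<comment> \<open>[E2]: pushouts along admissible monics exist and admissible monics are stable under them\<close>
     (\<forall>X Y X' i f. adm_monic C E X Y i \<and> X' \<in> Obj C \<and> f \<in> Hom C X X' \<longrightarrow>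
        (\<exists>Y' i' f'. Y' \<in> Obj C \<and> i' \<in> Hom C X' Y' \<and> f' \<in> Hom C Y Y' \<and>
           cmp C i' f = cmp C f' i \<and>
           (\<forall>W\<in>Obj C. \<forall>a\<in>Hom C X' W. \<forall>b\<in>Hom C Y W. cmp C a f = cmp C b i \<longrightarrow>
              (\<exists>h\<in>Hom C Y' W. cmp C h i' = a \<and> cmp C h f' = b \<and>
                 (\<forall>h'\<in>Hom C Y' W. cmp C h' i' = a \<and> cmp C h' f' = b \<longrightarrow> h' = h))) \<and>
           adm_monic C E X' Y' i')) \<and>
     \<comment> \<open>[E2op]: pullbacks along admissible epics exist and admissible epics are stable under them\<close>
     (\<forall>Y Z Z' d f. adm_epic C E Y Z d \<and> Z' \<in> Obj C \<and> f \<in> Hom C Z' Z \<longrightarrow>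
        (\<exists>Y' d' f'. Y' \<in> Obj C \<and> d' \<in> Hom C Y' Z' \<and> f' \<in> Hom C Y' Y \<and>
           cmp C f d' = cmp C d f' \<and>
           (\<forall>W\<in>Obj C. \<forall>a\<in>Hom C W Z'. \<forall>b\<in>Hom C W Y. cmp C f a = cmp C d b \<longrightarrow>
              (\<exists>h\<in>Hom C W Y'. cmp C d' h = a \<and> cmp C f' h = b \<and>
                 (\<forall>h'\<in>Hom C W Y'. cmp C d' h' = a \<and> cmp C f' h' = b \<longrightarrow> h' = h))) \<and>
           adm_epic C E Y' Z' d'))"

definition proper_adm_sub :: "('o,'m) addcat \<Rightarrow> ('o,'m) conflations \<Rightarrow> 'o \<Rightarrow> 'o \<Rightarrow> bool" where
  "proper_adm_sub C E X Y \<longleftrightarrow> (\<exists>i. adm_monic C E X Y i \<and> \<not> is_iso C X Y i)"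

definition E_simple :: "('o,'m) addcat \<Rightarrow> ('o,'m) conflations \<Rightarrow> 'o \<Rightarrow> bool" where
  "E_simple C E S \<longleftrightarrow> S \<in> Obj C \<and> \<not> is_zero_obj C S \<and>
     (\<forall>A i. adm_monic C E A S i \<longrightarrow> is_zero_obj C A \<or> isomorphic C A S)"

definition indecomposable :: "('o,'m) addcat \<Rightarrow> 'o \<Rightarrow> bool" where
  "indecomposable C X \<longleftrightarrow> X \<in> Obj C \<and> \<not> is_zero_obj C X \<and>
     (\<forall>X1 X2 i1 i2 p1 p2. is_biproduct C X1 X2 X i1 i2 p1 p2 \<longrightarrow>
        is_zero_obj C X1 \<or> is_zero_obj C X2)"

definition E_chain :: "('o,'m) addcat \<Rightarrow> ('o,'m) conflations \<Rightarrow> 'o list \<Rightarrow> bool" where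
  "E_chain C E xs \<longleftrightarrow> xs \<noteq> [] \<and> set xs \<subseteq> Obj C \<and>
     (\<forall>k < length xs - 1. proper_adm_sub C E (xs ! k) (xs ! Suc k))"

definition E_length :: "('o,'m) addcat \<Rightarrow> ('o,'m) conflations \<Rightarrow> 'o \<Rightarrow> enat" where
  "E_length C E X = Sup {enat (length xs - 1) | xs.
      E_chain C E xs \<and> is_zero_obj C (hd xs) \<and> last xs = X}"

definition E_finite :: "('o,'m) addcat \<Rightarrow> ('o,'m) conflations \<Rightarrow> bool" where
  "E_finite C E \<longleftrightarrow> (\<forall>X\<in>Obj C. E_length C E X < \<infinity>)"

definition seq_le :: "nat list \<Rightarrow> nat list \<Rightarrow> bool" (infix "\<lll>" 50) where
  "x \<lll> y \<longleftrightarrow> x = y \<or> (length x < length y \<and> take (length x) y = x) \<or>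
     (\<exists>i < min (length x) (length y). take i x = take i y \<and> x ! i > y ! i)"

definition GR_seqs :: "('o,'m) addcat \<Rightarrow> ('o,'m) conflations \<Rightarrow> 'o \<Rightarrow> nat list set" where
  "GR_seqs C E X = {map (\<lambda>Y. the_enat (E_length C E Y)) xs | xs.
      E_chain C E xs \<and> last xs = X \<and> (\<forall>Y\<in>set xs. indecomposable C Y)}"

definition GR_measure :: "('o,'m) addcat \<Rightarrow> ('o,'m) conflations \<Rightarrow> 'o \<Rightarrow> nat list" where
  "GR_measure C E X = (THE s. s \<in> GR_seqs C E X \<and> (\<forall>t\<in>GR_seqs C E X. t \<lll> s))"

end

theory Submission
  imports Defs
begin

definition RR :: "(nat \<times> nat) set" where "RR = {(a,b). b < a}"

lemma seq_le_lexord: "x \<lll> y \<longleftrightarrow> x = y \<or> (x,y) \<in> lexord RR"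
  unfolding seq_le_def lexord_take_index_conv RR_def by auto

lemma seq_le_total: "x \<lll> y \<or> y \<lll> x"
proof -
  have "\<forall>a b. (a,b)\<in>RR \<or> a=b \<or> (b,a)\<in>RR" by (auto simp: RR_def)
  then show ?thesis unfolding seq_le_lexord using lexord_linear[of RR x y] by blast
qed

lemma RR_trans: "trans RR" unfolding RR_def trans_def by auto

lemma seq_le_trans: "x \<lll> y \<Longrightarrow> y \<lll> z \<Longrightarrow> x \<lll> z"
  unfolding seq_le_lexord using lexord_trans[OF _ _ RR_trans] by blast

lemma seq_le_antisym: "x \<lll> y \<Longrightarrow> y \<lll> x \<Longrightarrow> x = y"
  unfolding seq_le_lexord using lexord_trans[OF _ _ RR_trans, of x y x] lexord_irreflexive[of RR x]
  by (auto simp: RR_def)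

lemma seq_le_refl: "x \<lll> x" by (simp add: seq_le_def)

lemma seq_max_exists: "finite S \<Longrightarrow> S \<noteq> {} \<Longrightarrow> \<exists>m\<in>S. \<forall>t\<in>S. t \<lll> m"
proof (induction S rule: finite_ne_induct)
  case (singleton x) then show ?case by (simp add: seq_le_refl)
next
  case (insert x F)
  then obtain m where m: "m \<in> F" "\<forall>t\<in>F. t \<lll> m" by blast
  show ?case
  proof (cases "x \<lll> m")
    case True then show ?thesis using m by auto
  next
    case False then have "m \<lll> x" using seq_le_total by blast
    have "\<forall>t\<in>insert x F. t \<lll> x" using m seq_le_trans \<open>m \<lll> x\<close> seq_le_refl by blast
    then show ?thesis by blast
  qed
qed

lemma one_le: "[1] \<lll> 1 # rest"
proof (cases "rest = []")
  case True then show ?thesis by (simp add: seq_le_refl)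
next
  case False then show ?thesis unfolding seq_le_def by (intro disjI2 disjI1) simp
qed

lemma not_le_one: "rest \<noteq> [] \<Longrightarrow> \<not> (1 # rest \<lll> [1])"
  unfolding seq_le_def by (simp add: less_Suc_eq_0_disj)

locale exc =
  fixes C :: "('o,'m) addcat" and E :: "('o,'m) conflations"
  assumes ex: "is_exact_category C E" and fin: "E_finite C E"
begin

lemma pre: "is_preadditive C"
  using ex[unfolded is_exact_category_def is_additive_def] by blast
lemma cat: "is_category C"
  using pre[unfolded is_preadditive_def] by blast

lemma id_hom: "X \<in> Obj C \<Longrightarrow> idm C X \<in> Hom C X X"
  using cat unfolding is_category_def by blast
lemma comp_hom: "\<lbrakk>X \<in> Obj C; Y \<in> Obj C; Z \<in> Obj C; f \<in> Hom C X Y; g \<in> Hom C Y Z\<rbrakk> \<Longrightarrow> cmp C g f \<in> Hom C X Z"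
  using cat unfolding is_category_def by blast
lemma assoc: "\<lbrakk>W \<in> Obj C; X \<in> Obj C; Y \<in> Obj C; Z \<in> Obj C; f \<in> Hom C W X; g \<in> Hom C X Y; h \<in> Hom C Y Z\<rbrakk>
   \<Longrightarrow> cmp C h (cmp C g f) = cmp C (cmp C h g) f"
  using cat unfolding is_category_def by blast
lemma idr: "\<lbrakk>X \<in> Obj C; Y \<in> Obj C; f \<in> Hom C X Y\<rbrakk> \<Longrightarrow> cmp C f (idm C X) = f"
  using cat unfolding is_category_def by blast
lemma idl: "\<lbrakk>X \<in> Obj C; Y \<in> Obj C; f \<in> Hom C X Y\<rbrakk> \<Longrightarrow> cmp C (idm C Y) f = f"
  using cat unfolding is_category_def by blast

lemma pre_XY: "X \<in> Obj C \<Longrightarrow> Y \<in> Obj C \<Longrightarrow>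
        pzero C X Y \<in> Hom C X Y \<and>
        (\<forall>f\<in>Hom C X Y. \<forall>g\<in>Hom C X Y. padd C f g \<in> Hom C X Y) \<and>
        (\<forall>f\<in>Hom C X Y. pneg C f \<in> Hom C X Y) \<and>
        (\<forall>f\<in>Hom C X Y. \<forall>g\<in>Hom C X Y. \<forall>h\<in>Hom C X Y.
            padd C (padd C f g) h = padd C f (padd C g h)) \<and>
        (\<forall>f\<in>Hom C X Y. \<forall>g\<in>Hom C X Y. padd C f g = padd C g f) \<and>
        (\<forall>f\<in>Hom C X Y. padd C f (pzero C X Y) = f) \<and>
        (\<forall>f\<in>Hom C X Y. padd C f (pneg C f) = pzero C X Y)"
  using pre[unfolded is_preadditive_def, THEN conjunct2, THEN conjunct1] by blast
lemma pre_XYZ: "X \<in> Obj C \<Longrightarrow> Y \<in> Obj C \<Longrightarrow> Z \<in> Obj C \<Longrightarrow>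
        (\<forall>f\<in>Hom C X Y. \<forall>g\<in>Hom C Y Z. \<forall>g'\<in>Hom C Y Z.
            cmp C (padd C g g') f = padd C (cmp C g f) (cmp C g' f)) \<and>
        (\<forall>f\<in>Hom C X Y. \<forall>f'\<in>Hom C X Y. \<forall>g\<in>Hom C Y Z.
            cmp C g (padd C f f') = padd C (cmp C g f) (cmp C g f'))"
  using pre[unfolded is_preadditive_def, THEN conjunct2, THEN conjunct2] by blast

lemma zero_hom: "\<lbrakk>X \<in> Obj C; Y \<in> Obj C\<rbrakk> \<Longrightarrow> pzero C X Y \<in> Hom C X Y"
  using pre_XY by blast
lemma add_hom: "\<lbrakk>X \<in> Obj C; Y \<in> Obj C; f \<in> Hom C X Y; g \<in> Hom C X Y\<rbrakk> \<Longrightarrow> padd C f g \<in> Hom C X Y"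
  using pre_XY by blast
lemma neg_hom: "\<lbrakk>X \<in> Obj C; Y \<in> Obj C; f \<in> Hom C X Y\<rbrakk> \<Longrightarrow> pneg C f \<in> Hom C X Y"
  using pre_XY by blast
lemma add_assoc: "\<lbrakk>X \<in> Obj C; Y \<in> Obj C; f \<in> Hom C X Y; g \<in> Hom C X Y; h \<in> Hom C X Y\<rbrakk>
   \<Longrightarrow> padd C (padd C f g) h = padd C f (padd C g h)"
proof -
  assume a: "X \<in> Obj C" "Y \<in> Obj C" "f \<in> Hom C X Y" "g \<in> Hom C X Y" "h \<in> Hom C X Y"
  have "\<forall>f\<in>Hom C X Y. \<forall>g\<in>Hom C X Y. \<forall>h\<in>Hom C X Y.
            padd C (padd C f g) h = padd C f (padd C g h)" using pre_XY[OF a(1,2)] by (elim conjE)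
  then show ?thesis using a by blast
qed
lemma add_comm: "\<lbrakk>X \<in> Obj C; Y \<in> Obj C; f \<in> Hom C X Y; g \<in> Hom C X Y\<rbrakk> \<Longrightarrow> padd C f g = padd C g f"
proof -
  assume a: "X \<in> Obj C" "Y \<in> Obj C" "f \<in> Hom C X Y" "g \<in> Hom C X Y"
  have "\<forall>f\<in>Hom C X Y. \<forall>g\<in>Hom C X Y. padd C f g = padd C g f" using pre_XY[OF a(1,2)] by (elim conjE)
  then show ?thesis using a by blast
qed
lemma add_zero: "\<lbrakk>X \<in> Obj C; Y \<in> Obj C; f \<in> Hom C X Y\<rbrakk> \<Longrightarrow> padd C f (pzero C X Y) = f"
  using pre_XY by blast
lemma add_neg: "\<lbrakk>X \<in> Obj C; Y \<in> Obj C; f \<in> Hom C X Y\<rbrakk> \<Longrightarrow> padd C f (pneg C f) = pzero C X Y"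
  using pre_XY by blast
lemma distl: "\<lbrakk>X \<in> Obj C; Y \<in> Obj C; Z \<in> Obj C; f \<in> Hom C X Y; g \<in> Hom C Y Z; g' \<in> Hom C Y Z\<rbrakk>
   \<Longrightarrow> cmp C (padd C g g') f = padd C (cmp C g f) (cmp C g' f)"
  using pre_XYZ by blast
lemma distr: "\<lbrakk>X \<in> Obj C; Y \<in> Obj C; Z \<in> Obj C; f \<in> Hom C X Y; f' \<in> Hom C X Y; g \<in> Hom C Y Z\<rbrakk>
   \<Longrightarrow> cmp C g (padd C f f') = padd C (cmp C g f) (cmp C g f')"
  using pre_XYZ by blast

lemma cancel0:
  assumes "X \<in> Obj C" "Y \<in> Obj C" "a \<in> Hom C X Y" "b \<in> Hom C X Y" "padd C a b = b"
  shows "a = pzero C X Y"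
proof -
  have nb: "pneg C b \<in> Hom C X Y" using assms neg_hom by blast
  have "padd C (padd C a b) (pneg C b) = padd C a (padd C b (pneg C b))"
    using assms nb add_assoc by blast
  also have "\<dots> = a" using assms add_neg add_zero by simp
  finally show ?thesis using assms add_neg by simp
qed

lemma comp_zero_r:
  assumes "X \<in> Obj C" "Y \<in> Obj C" "V \<in> Obj C" "f \<in> Hom C Y V"
  shows "cmp C f (pzero C X Y) = pzero C X V"
proof -
  let ?z = "pzero C X Y"
  have z: "?z \<in> Hom C X Y" using assms zero_hom by blast
  have zz: "padd C ?z ?z = ?z" using add_zero[OF assms(1,2) z] .
  have fz: "cmp C f ?z \<in> Hom C X V" using comp_hom assms z by blast
  have "cmp C f ?z = padd C (cmp C f ?z) (cmp C f ?z)"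
    using distr[OF assms(1,2,3) z z assms(4)] zz by simp
  then show ?thesis using cancel0[OF assms(1,3) fz fz] by simp
qed

lemma comp_zero_l:
  assumes "X \<in> Obj C" "Y \<in> Obj C" "V \<in> Obj C" "g \<in> Hom C X Y"
  shows "cmp C (pzero C Y V) g = pzero C X V"
proof -
  let ?z = "pzero C Y V"
  have z: "?z \<in> Hom C Y V" using assms zero_hom by blast
  have zz: "padd C ?z ?z = ?z" using add_zero[OF assms(2,3) z] .
  have fz: "cmp C ?z g \<in> Hom C X V" using comp_hom assms z by blast
  have "cmp C ?z g = padd C (cmp C ?z g) (cmp C ?z g)"
    using distl[OF assms(1,2,3) assms(4) z z] zz by simp
  then show ?thesis using cancel0[OF assms(1,3) fz fz] by simp
qed

lemma zero_obj: "is_zero_obj C Z \<Longrightarrow> Z \<in> Obj C"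
  unfolding is_zero_obj_def by blast
lemma zero_out: "\<lbrakk>is_zero_obj C Z; V \<in> Obj C; f \<in> Hom C Z V\<rbrakk> \<Longrightarrow> f = pzero C Z V"
  unfolding is_zero_obj_def using zero_hom by blast
lemma zero_in: "\<lbrakk>is_zero_obj C Z; V \<in> Obj C; f \<in> Hom C V Z\<rbrakk> \<Longrightarrow> f = pzero C V Z"
  unfolding is_zero_obj_def using zero_hom by blast

lemma conf_kc: "(X,Y,Z,i,d) \<in> E \<Longrightarrow> is_kc_pair C X Y Z i d"
  using ex[unfolded is_exact_category_def, THEN conjunct2, THEN conjunct1] by blast
lemma conf_obj: "(X,Y,Z,i,d) \<in> E \<Longrightarrow> X \<in> Obj C \<and> Y \<in> Obj C \<and> Z \<in> Obj C \<and> i \<in> Hom C X Y \<and> d \<in> Hom C Y Z"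
  using conf_kc unfolding is_kc_pair_def is_kernel_def by blast
lemma adm_obj: "adm_monic C E X Y i \<Longrightarrow> X \<in> Obj C \<and> Y \<in> Obj C \<and> i \<in> Hom C X Y"
  unfolding adm_monic_def using conf_obj by blast
lemma E1: "adm_monic C E X Y f \<Longrightarrow> adm_monic C E Y Z g \<Longrightarrow> adm_monic C E X Z (cmp C g f)"
  using ex[unfolded is_exact_category_def, THEN conjunct2, THEN conjunct2, THEN conjunct2, THEN conjunct2, THEN conjunct2, THEN conjunct1] by blast
lemma E0: "X \<in> Obj C \<Longrightarrow> adm_monic C E X X (idm C X)"
  using ex[unfolded is_exact_category_def, THEN conjunct2, THEN conjunct2, THEN conjunct2, THEN conjunct1] by blast
lemma E0op: "X \<in> Obj C \<Longrightarrow> adm_epic C E X X (idm C X)"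
  using ex[unfolded is_exact_category_def, THEN conjunct2, THEN conjunct2, THEN conjunct2, THEN conjunct2, THEN conjunct1] by blast
lemma isoclos: "\<lbrakk>(X, Y, Z, i, d) \<in> E; is_kc_pair C X' Y' Z' i' d'; is_iso C X X' a; is_iso C Y Y' b; is_iso C Z Z' c;
        cmp C b i = cmp C i' a; cmp C c d = cmp C d' b\<rbrakk> \<Longrightarrow> (X', Y', Z', i', d') \<in> E"
  using ex[unfolded is_exact_category_def, THEN conjunct2, THEN conjunct2, THEN conjunct1] by fast
lemma E2: "\<lbrakk>adm_monic C E X Y i; X' \<in> Obj C; f \<in> Hom C X X'\<rbrakk> \<Longrightarrow>
        (\<exists>Y' i' f'. Y' \<in> Obj C \<and> i' \<in> Hom C X' Y' \<and> f' \<in> Hom C Y Y' \<and>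
           cmp C i' f = cmp C f' i \<and>
           (\<forall>W\<in>Obj C. \<forall>a\<in>Hom C X' W. \<forall>b\<in>Hom C Y W. cmp C a f = cmp C b i \<longrightarrow>
              (\<exists>h\<in>Hom C Y' W. cmp C h i' = a \<and> cmp C h f' = b \<and>
                 (\<forall>h'\<in>Hom C Y' W. cmp C h' i' = a \<and> cmp C h' f' = b \<longrightarrow> h' = h))) \<and>
           adm_monic C E X' Y' i')"
  using ex[unfolded is_exact_category_def, THEN conjunct2, THEN conjunct2, THEN conjunct2, THEN conjunct2, THEN conjunct2, THEN conjunct2, THEN conjunct2, THEN conjunct1] by blast

lemma zero_objI:
  assumes Y: "Y \<in> Obj C" and u: "\<And>V h h'. V \<in> Obj C \<Longrightarrow> h \<in> Hom C V Y \<Longrightarrow> h' \<in> Hom C V Y \<Longrightarrow> h = h'"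
  shows "is_zero_obj C Y"
proof -
  have idz: "idm C Y = pzero C Y Y" using u[OF Y id_hom[OF Y] zero_hom[OF Y Y]] .
  have out: "f = pzero C Y V" if "V \<in> Obj C" "f \<in> Hom C Y V" for V f
  proof -
    have "f = cmp C f (idm C Y)" using idr Y that by simp
    also have "\<dots> = pzero C Y V" using idz comp_zero_r Y that by simp
    finally show ?thesis .
  qed
  show ?thesis unfolding is_zero_obj_def
    using Y out u zero_hom by metis
qed

lemma zero_eq_out: "\<lbrakk>is_zero_obj C Z; V \<in> Obj C; f \<in> Hom C Z V; g \<in> Hom C Z V\<rbrakk> \<Longrightarrow> f = g"
  using zero_out by blast
lemma zero_eq_in: "\<lbrakk>is_zero_obj C Z; V \<in> Obj C; f \<in> Hom C V Z; g \<in> Hom C V Z\<rbrakk> \<Longrightarrow> f = g"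
  using zero_in by blast

lemma ZM:
  assumes X: "X \<in> Obj C"
  shows "\<exists>Y i. is_zero_obj C Y \<and> adm_monic C E Y X i"
proof -
  obtain Y i where c: "(Y, X, X, i, idm C X) \<in> E" using E0op[OF X] unfolding adm_epic_def by blast
  have k: "is_kernel C Y X X i (idm C X)" using conf_kc[OF c] unfolding is_kc_pair_def by blast
  have Y: "Y \<in> Obj C" and ih: "i \<in> Hom C Y X" and ci: "cmp C (idm C X) i = pzero C Y X"
    using k unfolding is_kernel_def by blast+
  have i0: "i = pzero C Y X" using ci idl[OF Y X ih] by simp
  have univ: "\<And>W g. W \<in> Obj C \<Longrightarrow> g \<in> Hom C W X \<Longrightarrow> cmp C (idm C X) g = pzero C W X \<Longrightarrow>
        (\<exists>h\<in>Hom C W Y. cmp C i h = g \<and> (\<forall>h'\<in>Hom C W Y. cmp C i h' = g \<longrightarrow> h' = h))"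
    using k unfolding is_kernel_def by blast
  have "is_zero_obj C Y"
  proof (rule zero_objI[OF Y])
    fix V h h' assume V: "V \<in> Obj C" and h: "h \<in> Hom C V Y" and h': "h' \<in> Hom C V Y"
    have g: "pzero C V X \<in> Hom C V X" using zero_hom V X by blast
    have cg: "cmp C (idm C X) (pzero C V X) = pzero C V X" using idl V X g by blast
    obtain h0 where "h0 \<in> Hom C V Y" "\<forall>h'\<in>Hom C V Y. cmp C i h' = pzero C V X \<longrightarrow> h' = h0"
      using univ[OF V g cg] by blast
    moreover have "cmp C i h = pzero C V X" "cmp C i h' = pzero C V X"
      using i0 comp_zero_l V Y X h h' by blast+
    ultimately show "h = h'" using h h' by blast
  qed
  then show ?thesis using c unfolding adm_monic_def by blast
qed

lemma iso_zero:
  assumes Z: "is_zero_obj C Z" and i: "is_iso C Z X i"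
  shows "is_zero_obj C X"
proof -
  obtain g where X: "X \<in> Obj C" and ih: "i \<in> Hom C Z X" and g: "g \<in> Hom C X Z"
    and ig: "cmp C i g = idm C X" and zo: "Z \<in> Obj C"
    using i unfolding is_iso_def by blast
  show ?thesis
  proof (rule zero_objI[OF X])
    fix V h h' assume V: "V \<in> Obj C" and h: "h \<in> Hom C V X" and h': "h' \<in> Hom C V X"
    have "cmp C g h = cmp C g h'" using zero_eq_in[OF Z V] comp_hom V X zo h h' g by blast
    moreover have "h = cmp C i (cmp C g h)" using assoc[OF V X zo X h g ih] ig idl V X h by simp
    moreover have "h' = cmp C i (cmp C g h')" using assoc[OF V X zo X h' g ih] ig idl V X h' by simp
    ultimately show "h = h'" by simp
  qed
qed

lemma zero_zero_iso:
  assumes Z: "is_zero_obj C Z" and Z': "is_zero_obj C Z'" and i: "i \<in> Hom C Z Z'"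
  shows "is_iso C Z Z' i"
proof -
  have zo: "Z \<in> Obj C" "Z' \<in> Obj C" using Z Z' zero_obj by blast+
  have g: "pzero C Z' Z \<in> Hom C Z' Z" using zero_hom zo by blast
  have "cmp C (pzero C Z' Z) i = idm C Z" using zero_eq_in[OF Z zo(1)] comp_hom zo i g id_hom by metis
  moreover have "cmp C i (pzero C Z' Z) = idm C Z'" using zero_eq_in[OF Z' zo(2)] comp_hom zo i g id_hom by metis
  ultimately show ?thesis unfolding is_iso_def using zo i g by blast
qed

lemma iso_adm:
  assumes phi: "is_iso C A X \<phi>"
  shows "adm_monic C E A X \<phi>"
proof -
  obtain \<psi> where A: "A \<in> Obj C" and X: "X \<in> Obj C" and ph: "\<phi> \<in> Hom C A X" and ps: "\<psi> \<in> Hom C X A"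
    and pp: "cmp C \<psi> \<phi> = idm C A" and pp2: "cmp C \<phi> \<psi> = idm C X"
    using phi unfolding is_iso_def by blast
  obtain Zq d where c: "(A, A, Zq, idm C A, d) \<in> E" using E0[OF A] unfolding adm_monic_def by blast
  have kc: "is_kc_pair C A A Zq (idm C A) d" using conf_kc[OF c] .
  have Zq: "Zq \<in> Obj C" and dh: "d \<in> Hom C A Zq" and d0: "cmp C d (idm C A) = pzero C A Zq"
    using kc unfolding is_kc_pair_def is_kernel_def by blast+
  have d0': "d = pzero C A Zq" using d0 idr[OF A Zq dh] by simp
  have cok: "\<And>W g. W \<in> Obj C \<Longrightarrow> g \<in> Hom C A W \<Longrightarrow> cmp C g (idm C A) = pzero C A W \<Longrightarrow>
        (\<exists>h\<in>Hom C Zq W. cmp C h d = g \<and> (\<forall>h'\<in>Hom C Zq W. cmp C h' d = g \<longrightarrow> h' = h))"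
    using kc unfolding is_kc_pair_def is_cokernel_def by blast
  let ?d' = "cmp C d \<psi>"
  have d'h: "?d' \<in> Hom C X Zq" using comp_hom X A Zq ps dh by blast
  have d'p: "cmp C ?d' \<phi> = d" using assoc[OF A X A Zq ph ps dh] pp idr[OF A Zq dh] by simp
  have ker: "is_kernel C A X Zq \<phi> ?d'"
    unfolding is_kernel_def
  proof (intro conjI ballI impI)
    show "cmp C ?d' \<phi> = pzero C A Zq" using d'p d0' by simp
  next
    fix W g assume W: "W \<in> Obj C" and g: "g \<in> Hom C W X" and "cmp C ?d' g = pzero C W Zq"
    have pg: "cmp C \<psi> g \<in> Hom C W A" using comp_hom W X A g ps by blast
    have e1: "cmp C \<phi> (cmp C \<psi> g) = g" using assoc[OF W X A X g ps ph] pp2 idl W X g by simp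
    show "\<exists>h\<in>Hom C W A. cmp C \<phi> h = g \<and> (\<forall>h'\<in>Hom C W A. cmp C \<phi> h' = g \<longrightarrow> h' = h)"
    proof (intro bexI conjI ballI impI)
      show "cmp C \<phi> (cmp C \<psi> g) = g" by (rule e1)
    next
      fix h' assume h': "h' \<in> Hom C W A" and "cmp C \<phi> h' = g"
      then show "h' = cmp C \<psi> g" using assoc[OF W A X A h' ph ps] pp idl W A h' by simp
    qed (rule pg)
  qed (use A X Zq ph d'h in auto)
  have coker: "is_cokernel C A X Zq \<phi> ?d'"
    unfolding is_cokernel_def
  proof (intro conjI ballI impI)
    show "cmp C ?d' \<phi> = pzero C A Zq" using d'p d0' by simp
  next
    fix W g assume W: "W \<in> Obj C" and g: "g \<in> Hom C X W" and g0: "cmp C g \<phi> = pzero C A W"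
    have gp: "cmp C g \<phi> \<in> Hom C A W" using comp_hom A X W ph g by blast
    have "cmp C (cmp C g \<phi>) (idm C A) = pzero C A W" using idr[OF A W gp] g0 by simp
    then obtain h where h: "h \<in> Hom C Zq W" "cmp C h d = cmp C g \<phi>"
      and hu: "\<forall>h'\<in>Hom C Zq W. cmp C h' d = cmp C g \<phi> \<longrightarrow> h' = h"
      using cok[OF W gp] by blast
    show "\<exists>h\<in>Hom C Zq W. cmp C h ?d' = g \<and> (\<forall>h'\<in>Hom C Zq W. cmp C h' ?d' = g \<longrightarrow> h' = h)"
    proof (intro bexI conjI ballI impI)
      have "cmp C h ?d' = cmp C (cmp C h d) \<psi>" using assoc[OF X A Zq W ps dh h(1)] .
      also have "\<dots> = cmp C g (cmp C \<phi> \<psi>)" using h(2) assoc[OF X A X W ps ph g] by simp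
      also have "\<dots> = g" using pp2 idr X W g by simp
      finally show "cmp C h ?d' = g" .
    next
      fix h' assume h': "h' \<in> Hom C Zq W" and e: "cmp C h' ?d' = g"
      have "cmp C h' d = cmp C h' (cmp C ?d' \<phi>)" using d'p by simp
      also have "\<dots> = cmp C (cmp C h' ?d') \<phi>" using assoc[OF A X Zq W ph d'h h'] .
      finally have "cmp C h' d = cmp C g \<phi>" using e by simp
      then show "h' = h" using hu h' by blast
    qed (rule h(1))
  qed (use A X Zq ph d'h in auto)
  have isoA: "is_iso C A A (idm C A)" unfolding is_iso_def using A id_hom idl by blast
  have isoZ: "is_iso C Zq Zq (idm C Zq)" unfolding is_iso_def using Zq id_hom idl by blast
  have "(A, X, Zq, \<phi>, ?d') \<in> E"
  proof (rule isoclos[OF c _ isoA phi isoZ])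
    show "is_kc_pair C A X Zq \<phi> ?d'" unfolding is_kc_pair_def using ker coker by blast
    show "cmp C \<phi> (idm C A) = cmp C \<phi> (idm C A)" by simp
    show "cmp C (idm C Zq) d = cmp C ?d' \<phi>" using d'p idl A Zq dh by simp
  qed
  then show ?thesis unfolding adm_monic_def by blast
qed

lemma bip_objs: "is_biproduct C A B S i1 i2 p1 p2 \<Longrightarrow> A \<in> Obj C \<and> B \<in> Obj C \<and> S \<in> Obj C \<and>
   i1 \<in> Hom C A S \<and> i2 \<in> Hom C B S \<and> p1 \<in> Hom C S A \<and> p2 \<in> Hom C S B \<and>
   cmp C p1 i1 = idm C A \<and> cmp C p2 i2 = idm C B \<and> padd C (cmp C i1 p1) (cmp C i2 p2) = idm C S"
  unfolding is_biproduct_def by blast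

lemma bip_p2i1:
  assumes bp: "is_biproduct C A B S i1 i2 p1 p2"
  shows "cmp C p2 i1 = pzero C A B"
proof -
  have A: "A \<in> Obj C" and B: "B \<in> Obj C" and S: "S \<in> Obj C" and i1: "i1 \<in> Hom C A S" and i2: "i2 \<in> Hom C B S"
    and p1: "p1 \<in> Hom C S A" and p2: "p2 \<in> Hom C S B" and e1: "cmp C p1 i1 = idm C A" and e2: "cmp C p2 i2 = idm C B"
    and e3: "padd C (cmp C i1 p1) (cmp C i2 p2) = idm C S" using bip_objs[OF bp] by blast+
  have ip1: "cmp C i1 p1 \<in> Hom C S S" and ip2: "cmp C i2 p2 \<in> Hom C S S" using comp_hom A B S i1 i2 p1 p2 by blast+
  have x: "cmp C p2 (cmp C i1 p1) \<in> Hom C S B" using comp_hom S B ip1 p2 by blast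
  have "p2 = cmp C p2 (idm C S)" using idr S B p2 by simp
  also have "\<dots> = padd C (cmp C p2 (cmp C i1 p1)) (cmp C p2 (cmp C i2 p2))"
    using e3 distr[OF S S B ip1 ip2 p2] by simp
  also have "cmp C p2 (cmp C i2 p2) = p2" using assoc[OF S B S B p2 i2 p2] e2 idl B p2 S by simp
  finally have "padd C (cmp C p2 (cmp C i1 p1)) p2 = p2" by simp
  then have x0: "cmp C p2 (cmp C i1 p1) = pzero C S B" using cancel0[OF S B x p2] by simp
  have pi: "cmp C p2 i1 \<in> Hom C A B" using comp_hom A S B i1 p2 by blast
  have "cmp C p2 i1 = cmp C (cmp C p2 i1) (cmp C p1 i1)" using e1 idr A B pi by simp
  also have "\<dots> = cmp C (cmp C (cmp C p2 i1) p1) i1" using assoc[OF A S A B i1 p1 pi] .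
  also have "cmp C (cmp C p2 i1) p1 = cmp C p2 (cmp C i1 p1)" using assoc[OF S A S B p1 i1 p2] by simp
  finally show ?thesis using x0 comp_zero_l A S B i1 by simp
qed

lemma bip_p1i2:
  assumes bp: "is_biproduct C A B S i1 i2 p1 p2"
  shows "cmp C p1 i2 = pzero C B A"
proof -
  have A: "A \<in> Obj C" and B: "B \<in> Obj C" and S: "S \<in> Obj C" and i1: "i1 \<in> Hom C A S" and i2: "i2 \<in> Hom C B S"
    and p1: "p1 \<in> Hom C S A" and p2: "p2 \<in> Hom C S B" and e1: "cmp C p1 i1 = idm C A" and e2: "cmp C p2 i2 = idm C B"
    and e3: "padd C (cmp C i1 p1) (cmp C i2 p2) = idm C S" using bip_objs[OF bp] by blast+
  have ip1: "cmp C i1 p1 \<in> Hom C S S" and ip2: "cmp C i2 p2 \<in> Hom C S S" using comp_hom A B S i1 i2 p1 p2 by blast+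
  have x: "cmp C p1 (cmp C i2 p2) \<in> Hom C S A" using comp_hom S A ip2 p1 by blast
  have "p1 = cmp C p1 (idm C S)" using idr S A p1 by simp
  also have "\<dots> = padd C (cmp C p1 (cmp C i1 p1)) (cmp C p1 (cmp C i2 p2))"
    using e3 distr[OF S S A ip1 ip2 p1] by simp
  also have "cmp C p1 (cmp C i1 p1) = p1" using assoc[OF S A S A p1 i1 p1] e1 idl A p1 S by simp
  finally have "padd C p1 (cmp C p1 (cmp C i2 p2)) = p1" by simp
  then have "padd C (cmp C p1 (cmp C i2 p2)) p1 = p1" using add_comm[OF S A x p1] by simp
  then have x0: "cmp C p1 (cmp C i2 p2) = pzero C S A" using cancel0[OF S A x p1] by simp
  have pi: "cmp C p1 i2 \<in> Hom C B A" using comp_hom B S A i2 p1 by blast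
  have "cmp C p1 i2 = cmp C (cmp C p1 i2) (cmp C p2 i2)" using e2 idr B A pi by simp
  also have "\<dots> = cmp C (cmp C (cmp C p1 i2) p2) i2" using assoc[OF B S B A i2 p2 pi] .
  also have "cmp C (cmp C p1 i2) p2 = cmp C p1 (cmp C i2 p2)" using assoc[OF S B S A p2 i2 p1] by simp
  finally show ?thesis using x0 comp_zero_l B S A i2 by simp
qed

lemma split_adm:
  assumes bp: "is_biproduct C A B S i1 i2 p1 p2"
  shows "adm_monic C E A S i1"
proof -
  have A: "A \<in> Obj C" and B: "B \<in> Obj C" and S: "S \<in> Obj C" and i1: "i1 \<in> Hom C A S" and i2: "i2 \<in> Hom C B S"
    and p1: "p1 \<in> Hom C S A" and p2: "p2 \<in> Hom C S B" and e1: "cmp C p1 i1 = idm C A" and e2: "cmp C p2 i2 = idm C B"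
    and e3: "padd C (cmp C i1 p1) (cmp C i2 p2) = idm C S" using bip_objs[OF bp] by blast+
  obtain Y0 j where Y0: "is_zero_obj C Y0" and j: "adm_monic C E Y0 B j" using ZM[OF B] by blast
  have Y0o: "Y0 \<in> Obj C" and jh: "j \<in> Hom C Y0 B" using adm_obj[OF j] by blast+
  have f: "pzero C Y0 A \<in> Hom C Y0 A" using zero_hom Y0o A by blast
  obtain P i' f' where P: "P \<in> Obj C" and i': "i' \<in> Hom C A P" and f': "f' \<in> Hom C B P"
    and comm: "cmp C i' (pzero C Y0 A) = cmp C f' j"
    and univ: "\<forall>W\<in>Obj C. \<forall>a\<in>Hom C A W. \<forall>b\<in>Hom C B W. cmp C a (pzero C Y0 A) = cmp C b j \<longrightarrow>
              (\<exists>h\<in>Hom C P W. cmp C h i' = a \<and> cmp C h f' = b \<and>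
                 (\<forall>h'\<in>Hom C P W. cmp C h' i' = a \<and> cmp C h' f' = b \<longrightarrow> h' = h))"
    and am: "adm_monic C E A P i'"
    using E2[OF j A f] by blast
  have "cmp C i1 (pzero C Y0 A) = cmp C i2 j"
    using zero_eq_out[OF Y0 S] comp_hom Y0o A S B f i1 jh i2 by blast
  then obtain h where h: "h \<in> Hom C P S" and hi: "cmp C h i' = i1" and hf: "cmp C h f' = i2"
    using univ S i1 i2 by blast
  define g where "g = padd C (cmp C i' p1) (cmp C f' p2)"
  have ip: "cmp C i' p1 \<in> Hom C S P" and fp: "cmp C f' p2 \<in> Hom C S P" using comp_hom S A B P p1 p2 i' f' by blast+
  have g: "g \<in> Hom C P S \<Longrightarrow> True" by simp
  have gh: "g \<in> Hom C S P" unfolding g_def using add_hom S P ip fp by blast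
  have hg: "cmp C h g = idm C S"
  proof -
    have "cmp C h g = padd C (cmp C h (cmp C i' p1)) (cmp C h (cmp C f' p2))"
      unfolding g_def using distr[OF S P S ip fp h] .
    also have "cmp C h (cmp C i' p1) = cmp C i1 p1" using assoc[OF S A P S p1 i' h] hi by simp
    also have "cmp C h (cmp C f' p2) = cmp C i2 p2" using assoc[OF S B P S p2 f' h] hf by simp
    finally show ?thesis using e3 by simp
  qed
  have gi1: "cmp C g i1 = i'"
  proof -
    have "cmp C g i1 = padd C (cmp C (cmp C i' p1) i1) (cmp C (cmp C f' p2) i1)"
      unfolding g_def using distl[OF A S P i1 ip fp] .
    also have "cmp C (cmp C i' p1) i1 = i'" using assoc[OF A S A P i1 p1 i'] e1 idr A P i' by simp
    also have "cmp C (cmp C f' p2) i1 = pzero C A P"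
      using assoc[OF A S B P i1 p2 f'] bip_p2i1[OF bp] comp_zero_r A B P f' by simp
    finally show ?thesis using add_zero A P i' by simp
  qed
  have gi2: "cmp C g i2 = f'"
  proof -
    have "cmp C g i2 = padd C (cmp C (cmp C i' p1) i2) (cmp C (cmp C f' p2) i2)"
      unfolding g_def using distl[OF B S P i2 ip fp] .
    also have "cmp C (cmp C f' p2) i2 = f'" using assoc[OF B S B P i2 p2 f'] e2 idr B P f' by simp
    also have "cmp C (cmp C i' p1) i2 = pzero C B P"
      using assoc[OF B S A P i2 p1 i'] bip_p1i2[OF bp] comp_zero_r B A P i' by simp
    finally show ?thesis using add_zero B P f' add_comm zero_hom by metis
  qed
  have ghP: "cmp C g h \<in> Hom C P P" using comp_hom P S P h gh by blast
  have c1: "cmp C (cmp C g h) i' = i'" using assoc[OF A P S P i' h gh] hi gi1 by simp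
  have c2: "cmp C (cmp C g h) f' = f'" using assoc[OF B P S P f' h gh] hf gi2 by simp
  obtain h0 where "h0 \<in> Hom C P P" "\<forall>h'\<in>Hom C P P. cmp C h' i' = i' \<and> cmp C h' f' = f' \<longrightarrow> h' = h0"
    using univ P i' f' comm by blast
  moreover have "cmp C (idm C P) i' = i'" "cmp C (idm C P) f' = f'" using idl A B P i' f' by blast+
  ultimately have gh1: "cmp C g h = idm C P" using ghP c1 c2 id_hom P by metis
  have "is_iso C P S h" unfolding is_iso_def using P S h gh hg gh1 by blast
  then have "adm_monic C E P S h" by (rule iso_adm)
  from E1[OF am this] show ?thesis using hi by simp
qed

lemma split_iso:
  assumes bp: "is_biproduct C A B S i1 i2 p1 p2" and iso: "is_iso C A S i1"
  shows "is_zero_obj C B"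
proof -
  have A: "A \<in> Obj C" and B: "B \<in> Obj C" and S: "S \<in> Obj C" and i1: "i1 \<in> Hom C A S" and i2: "i2 \<in> Hom C B S"
    and p1: "p1 \<in> Hom C S A" and p2: "p2 \<in> Hom C S B" and e2: "cmp C p2 i2 = idm C B"
    using bip_objs[OF bp] by blast+
  obtain q where q: "q \<in> Hom C S A" and iq: "cmp C i1 q = idm C S" using iso unfolding is_iso_def by blast
  have qi2: "cmp C q i2 \<in> Hom C B A" using comp_hom B S A i2 q by blast
  have "i2 = cmp C (cmp C i1 q) i2" using iq idl B S i2 by simp
  also have "\<dots> = cmp C i1 (cmp C q i2)" using assoc[OF B S A S i2 q i1] by simp
  finally have "cmp C p2 i2 = cmp C p2 (cmp C i1 (cmp C q i2))" by simp
  also have "\<dots> = cmp C (cmp C p2 i1) (cmp C q i2)" using assoc[OF B A S B qi2 i1 p2] .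
  also have "\<dots> = pzero C B B" using bip_p2i1[OF bp] comp_zero_l B A B qi2 by simp
  finally have idB: "idm C B = pzero C B B" using e2 by simp
  show ?thesis
  proof (rule zero_objI[OF B])
    fix V h h' assume V: "V \<in> Obj C" and h: "h \<in> Hom C V B" and h': "h' \<in> Hom C V B"
    have "h = pzero C V B" using idl[OF V B h] idB comp_zero_l V B h by simp
    moreover have "h' = pzero C V B" using idl[OF V B h'] idB comp_zero_l V B h' by simp
    ultimately show "h = h'" by simp
  qed
qed

definition len :: "'o \<Rightarrow> nat" where "len X = the_enat (E_length C E X)"

lemma psub_obj: "proper_adm_sub C E A B \<Longrightarrow> A \<in> Obj C \<and> B \<in> Obj C"
  unfolding proper_adm_sub_def using adm_obj by blast

lemma chain_single: "X \<in> Obj C \<Longrightarrow> E_chain C E [X]"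
  unfolding E_chain_def by simp

lemma chain_step: "E_chain C E xs \<Longrightarrow> Suc k < length xs \<Longrightarrow> proper_adm_sub C E (xs!k) (xs!Suc k)"
  unfolding E_chain_def by auto

lemma chain_obj: "E_chain C E xs \<Longrightarrow> k < length xs \<Longrightarrow> xs!k \<in> Obj C"
  unfolding E_chain_def by auto

lemma chain_last_obj: "E_chain C E xs \<Longrightarrow> last xs \<in> Obj C"
  unfolding E_chain_def by auto

lemma chain_app:
  assumes "E_chain C E xs" "E_chain C E ys" "proper_adm_sub C E (last xs) (hd ys)"
  shows "E_chain C E (xs @ ys)"
proof -
  have ne: "xs \<noteq> []" "ys \<noteq> []" using assms unfolding E_chain_def by auto
  have "proper_adm_sub C E ((xs @ ys) ! k) ((xs @ ys) ! Suc k)" if k: "k < length (xs @ ys) - 1" for k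
  proof -
    consider "Suc k < length xs" | "Suc k = length xs" | "length xs \<le> k" by linarith
    then show ?thesis
    proof cases
      case 1 then show ?thesis using chain_step[OF assms(1)] by (simp add: nth_append)
    next
      case 2
      then have kk: "k = length xs - 1" by simp
      show ?thesis using assms(3) ne 2 kk
        by (simp add: nth_append last_conv_nth hd_conv_nth)
    next
      case 3
      then have "Suc (k - length xs) < length ys" using k by auto
      then show ?thesis using chain_step[OF assms(2), of "k - length xs"] 3
        by (simp add: nth_append Suc_diff_le)
    qed
  qed
  then show ?thesis using assms unfolding E_chain_def by auto
qed

lemma chain_append: "E_chain C E xs \<Longrightarrow> proper_adm_sub C E (last xs) B \<Longrightarrow> E_chain C E (xs @ [B])"
  using chain_app[of xs "[B]"] chain_single psub_obj by simp

lemma chain_take: "E_chain C E xs \<Longrightarrow> 0 < k \<Longrightarrow> E_chain C E (take k xs)"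
  unfolding E_chain_def by (auto dest: in_set_takeD)

lemma chain_drop: "E_chain C E xs \<Longrightarrow> k < length xs \<Longrightarrow> E_chain C E (drop k xs)"
  unfolding E_chain_def by (auto dest: in_set_dropD)

lemma len_fin: "X \<in> Obj C \<Longrightarrow> E_length C E X = enat (len X)"
  using fin unfolding E_finite_def len_def by auto

lemma len_ub:
  assumes "E_chain C E xs" "is_zero_obj C (hd xs)" "last xs = X"
  shows "length xs - 1 \<le> len X"
proof -
  have X: "X \<in> Obj C" using chain_last_obj assms by blast
  have "enat (length xs - 1) \<le> E_length C E X" unfolding E_length_def
    by (rule Sup_upper) (use assms in blast)
  then show ?thesis using len_fin[OF X] by simp
qed

lemma nonzero_len:
  assumes X: "X \<in> Obj C" and nz: "\<not> is_zero_obj C X"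
  shows "1 \<le> len X"
proof -
  obtain Y i where Y: "is_zero_obj C Y" and i: "adm_monic C E Y X i" using ZM[OF X] by blast
  have "\<not> is_iso C Y X i" using iso_zero[OF Y] nz by blast
  then have "proper_adm_sub C E Y X" using i unfolding proper_adm_sub_def by blast
  then have "E_chain C E [Y, X]" using chain_append[OF chain_single[OF zero_obj[OF Y]]] by simp
  from len_ub[OF this] show ?thesis using Y by simp
qed

lemma len_attained:
  assumes X: "X \<in> Obj C"
  shows "\<exists>xs. E_chain C E xs \<and> is_zero_obj C (hd xs) \<and> last xs = X \<and> length xs - 1 = len X"
proof -
  let ?S = "{enat (length xs - 1) | xs. E_chain C E xs \<and> is_zero_obj C (hd xs) \<and> last xs = X}"
  have ne: "?S \<noteq> {}"
  proof (cases "is_zero_obj C X")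
    case True
    then have "enat (length [X] - 1) \<in> ?S" using chain_single[OF X] by fastforce
    then show ?thesis by blast
  next
    case False
    obtain Y i where Y: "is_zero_obj C Y" and i: "adm_monic C E Y X i" using ZM[OF X] by blast
    have "\<not> is_iso C Y X i" using iso_zero[OF Y] False by blast
    then have "proper_adm_sub C E Y X" using i unfolding proper_adm_sub_def by blast
    then have "E_chain C E [Y, X]" using chain_append[OF chain_single[OF zero_obj[OF Y]]] by simp
    then have "enat (length [Y,X] - 1) \<in> ?S" using Y by fastforce
    then show ?thesis by blast
  qed
  have sup: "Sup ?S = enat (len X)" using len_fin[OF X] unfolding E_length_def by simp
  have "finite ?S" using sup ne unfolding Sup_enat_def by (auto split: if_splits)
  have "Sup ?S = Max ?S"
    by (simp only: Sup_enat_def ne \<open>finite ?S\<close> if_False if_True)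
  moreover have "Max ?S \<in> ?S" using Max_in \<open>finite ?S\<close> ne by blast
  ultimately have "Sup ?S \<in> ?S" by simp
  then show ?thesis using sup by auto
qed

lemma len_strict:
  assumes p: "proper_adm_sub C E A B"
  shows "len A < len B"
proof -
  have A: "A \<in> Obj C" using psub_obj[OF p] by blast
  obtain xs where xs: "E_chain C E xs" "is_zero_obj C (hd xs)" "last xs = A" "length xs - 1 = len A"
    using len_attained[OF A] by blast
  have ne: "xs \<noteq> []" using xs unfolding E_chain_def by blast
  have "E_chain C E (xs @ [B])" using chain_append[OF xs(1)] xs(3) p by simp
  from len_ub[OF this] have "length (xs @ [B]) - 1 \<le> len B" using xs ne by simp
  then have "length xs \<le> len B" by simp
  moreover have "length xs > 0" using ne by simp
  ultimately show ?thesis using xs(4) by linarith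
qed

lemma len_zero_zero: "X \<in> Obj C \<Longrightarrow> len X = 0 \<Longrightarrow> is_zero_obj C X"
  using nonzero_len by fastforce

lemma chain_len_mono:
  assumes c: "E_chain C E xs"
  shows "j < k \<Longrightarrow> k < length xs \<Longrightarrow> len (xs!j) < len (xs!k)"
proof (induction k)
  case 0 then show ?case by simp
next
  case (Suc k)
  have st: "len (xs!k) < len (xs!Suc k)" using len_strict[OF chain_step[OF c]] Suc.prems by simp
  show ?case
  proof (cases "j = k")
    case True then show ?thesis using st by simp
  next
    case False then show ?thesis using Suc st by simp
  qed
qed

lemma chain_monic:
  assumes c: "E_chain C E xs"
  shows "j < k \<Longrightarrow> k < length xs \<Longrightarrow> \<exists>i. adm_monic C E (xs!j) (xs!k) i"
proof (induction k)
  case 0 then show ?case by simp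
next
  case (Suc k)
  obtain i where st: "adm_monic C E (xs!k) (xs!Suc k) i" using chain_step[OF c] Suc.prems
    unfolding proper_adm_sub_def by blast
  show ?case
  proof (cases "j = k")
    case True then show ?thesis using st by blast
  next
    case False
    then obtain i' where "adm_monic C E (xs!j) (xs!k) i'" using Suc by auto
    then show ?thesis using E1 st by blast
  qed
qed

lemma iso_len_le:
  assumes phi: "is_iso C A X \<phi>"
  shows "len X \<le> len A"
proof -
  obtain \<psi> where A: "A \<in> Obj C" and X: "X \<in> Obj C" and ph: "\<phi> \<in> Hom C A X" and ps: "\<psi> \<in> Hom C X A"
    and pp: "cmp C \<psi> \<phi> = idm C A" and pp2: "cmp C \<phi> \<psi> = idm C X"
    using phi unfolding is_iso_def by blast
  have psiso: "is_iso C X A \<psi>" unfolding is_iso_def using A X ps ph pp pp2 by blast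
  obtain xs where xs: "E_chain C E xs" "is_zero_obj C (hd xs)" "last xs = X" "length xs - 1 = len X"
    using len_attained[OF X] by blast
  show ?thesis
  proof (cases "len X = 0")
    case True then show ?thesis by simp
  next
    case False
    then have L: "2 \<le> length xs" using xs(4) by simp
    define W where "W = xs ! (length xs - 2)"
    have ne: "xs \<noteq> []" using L by auto
    have s1: "Suc (length xs - 2) = length xs - 1" using L by simp
    have lx: "last xs = xs ! (length xs - 1)" using ne by (simp add: last_conv_nth)
    have "Suc (length xs - 2) < length xs" using L by simp
    from chain_step[OF xs(1) this] have "proper_adm_sub C E W X"
      unfolding W_def s1 using lx xs(3) by simp
    then obtain j where j: "adm_monic C E W X j" and nj: "\<not> is_iso C W X j"
      unfolding proper_adm_sub_def by blast
    have W: "W \<in> Obj C" and jh: "j \<in> Hom C W X" using adm_obj[OF j] by blast+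
    have am: "adm_monic C E W A (cmp C \<psi> j)" using E1[OF j iso_adm[OF psiso]] .
    have ni: "\<not> is_iso C W A (cmp C \<psi> j)"
    proof
      assume "is_iso C W A (cmp C \<psi> j)"
      then obtain r where r: "r \<in> Hom C A W" and r1: "cmp C r (cmp C \<psi> j) = idm C W"
        and r2: "cmp C (cmp C \<psi> j) r = idm C A" unfolding is_iso_def by blast
      have rp: "cmp C r \<psi> \<in> Hom C X W" using comp_hom X A W ps r by blast
      have e1: "cmp C (cmp C r \<psi>) j = idm C W" using assoc[OF W X A W jh ps r] r1 by simp
      have "cmp C j (cmp C r \<psi>) = cmp C (cmp C j r) \<psi>" using assoc[OF X A W X ps r jh] .
      also have "cmp C j r = cmp C \<phi> (cmp C (cmp C \<psi> j) r)"
      proof -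
        have "cmp C j r = cmp C (cmp C \<phi> \<psi>) (cmp C j r)" using pp2 idl X comp_hom A W X r jh by metis
        also have "\<dots> = cmp C \<phi> (cmp C \<psi> (cmp C j r))" using assoc[OF A X A X _ ps ph] comp_hom A W X r jh by metis
        also have "cmp C \<psi> (cmp C j r) = cmp C (cmp C \<psi> j) r" using assoc[OF A W X A r jh ps] .
        finally show ?thesis .
      qed
      also have "cmp C \<phi> (cmp C (cmp C \<psi> j) r) = \<phi>" using r2 idr A X ph by simp
      finally have e2: "cmp C j (cmp C r \<psi>) = idm C X" using pp2 by simp
      have "is_iso C W X j" unfolding is_iso_def using W X jh rp e1 e2 by blast
      then show False using nj by simp
    qed
    have pa: "proper_adm_sub C E W A" unfolding proper_adm_sub_def using am ni by blast
    have cb: "E_chain C E (butlast xs)"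
      using chain_take[OF xs(1), of "length xs - 1"] L by (simp add: butlast_conv_take)
    have bne: "butlast xs \<noteq> []" using L by (cases xs) auto
    have "last (butlast xs) = butlast xs ! (length (butlast xs) - 1)" using bne by (simp add: last_conv_nth)
    also have "\<dots> = xs ! (length xs - 2)" using L by (simp add: nth_butlast numeral_2_eq_2)
    finally have lb: "last (butlast xs) = W" unfolding W_def .
    have c2: "E_chain C E (butlast xs @ [A])" using chain_append[OF cb] lb pa by simp
    have "hd (butlast xs) = hd xs" using bne by (cases xs) auto
    then have "hd (butlast xs @ [A]) = hd xs" using bne by simp
    then have "length (butlast xs @ [A]) - 1 \<le> len A" using len_ub[OF c2] xs(2) by simp
    then show ?thesis using xs(4) L by simp
  qed
qed

lemma iso_len: "is_iso C A X \<phi> \<Longrightarrow> len A = len X"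
proof -
  assume phi: "is_iso C A X \<phi>"
  then obtain \<psi> where "is_iso C X A \<psi>" unfolding is_iso_def by blast
  then show ?thesis using iso_len_le phi by (meson le_antisym)
qed

lemma indec_obj: "indecomposable C X \<Longrightarrow> X \<in> Obj C \<and> \<not> is_zero_obj C X"
  unfolding indecomposable_def by blast

lemma gr_map: "map (\<lambda>Y. the_enat (E_length C E Y)) xs = map len xs"
  unfolding len_def by simp

lemma gr_single: "indecomposable C X \<Longrightarrow> [len X] \<in> GR_seqs C E X"
proof -
  assume X: "indecomposable C X"
  then have "[len X] = map len [X] \<and> E_chain C E [X] \<and> last [X] = X \<and> (\<forall>Z\<in>set [X]. indecomposable C Z)"
    using chain_single indec_obj by simp
  then show ?thesis unfolding GR_seqs_def gr_map
    by (intro CollectI exI[of _ "[X]"]) simp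
qed

lemma gr_props:
  assumes X: "indecomposable C X" and s: "s \<in> GR_seqs C E X"
  shows "s \<noteq> [] \<and> last s = len X \<and> length s \<le> len X \<and> (\<forall>k<length s. 1 \<le> s!k \<and> s!k \<le> len X)"
proof -
  obtain xs where xs: "E_chain C E xs" "last xs = X" "\<forall>Y\<in>set xs. indecomposable C Y" and sx: "s = map len xs"
    using s unfolding GR_seqs_def gr_map by blast
  have ne: "xs \<noteq> []" using xs unfolding E_chain_def by blast
  have h: "indecomposable C (hd xs)" using xs(3) ne by simp
  obtain Y i where Y: "is_zero_obj C Y" and i: "adm_monic C E Y (hd xs) i" using ZM indec_obj[OF h] by blast
  have "\<not> is_iso C Y (hd xs) i" using iso_zero[OF Y] indec_obj[OF h] by blast
  then have "proper_adm_sub C E Y (hd xs)" using i unfolding proper_adm_sub_def by blast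
  then have "E_chain C E ([Y] @ xs)" using chain_app[OF chain_single[OF zero_obj[OF Y]] xs(1)] by simp
  from len_ub[OF this] have L: "length xs \<le> len X" using Y xs(2) ne by simp
  have ent: "1 \<le> s!k \<and> s!k \<le> len X" if k: "k < length s" for k
  proof -
    have k': "k < length xs" using k sx by simp
    have "xs!k \<in> set xs" using k' by simp
    then have "1 \<le> len (xs!k)" using xs(3) indec_obj nonzero_len by blast
    moreover have "len (xs!k) \<le> len X"
    proof (cases "k = length xs - 1")
      case True then show ?thesis using xs(2) ne by (simp add: last_conv_nth)
    next
      case False
      then have "len (xs!k) < len (xs!(length xs - 1))" using chain_len_mono[OF xs(1)] k' by simp
      then show ?thesis using xs(2) ne by (simp add: last_conv_nth)
    qed
    ultimately show ?thesis using sx k' by simp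
  qed
  show ?thesis using ne sx L ent xs(2) by (simp add: last_map)
qed

lemma gr_finite:
  assumes X: "indecomposable C X"
  shows "finite (GR_seqs C E X)"
proof -
  have "GR_seqs C E X \<subseteq> {s. set s \<subseteq> {0..len X} \<and> length s \<le> len X}"
  proof
    fix s assume s: "s \<in> GR_seqs C E X"
    from gr_props[OF X s] show "s \<in> {s. set s \<subseteq> {0..len X} \<and> length s \<le> len X}"
      by (auto simp: in_set_conv_nth)
  qed
  then show ?thesis using finite_lists_length_le[of "{0..len X}" "len X"] finite_subset by blast
qed

lemma mu:
  assumes X: "indecomposable C X"
  shows "GR_measure C E X \<in> GR_seqs C E X \<and> (\<forall>t\<in>GR_seqs C E X. t \<lll> GR_measure C E X)"
proof -
  obtain m where m: "m \<in> GR_seqs C E X" "\<forall>t\<in>GR_seqs C E X. t \<lll> m"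
    using seq_max_exists[OF gr_finite[OF X]] gr_single[OF X] by blast
  have "GR_measure C E X = m" unfolding GR_measure_def
  proof (rule the_equality)
    show "m \<in> GR_seqs C E X \<and> (\<forall>t\<in>GR_seqs C E X. t \<lll> m)" using m by blast
  next
    fix s assume "s \<in> GR_seqs C E X \<and> (\<forall>t\<in>GR_seqs C E X. t \<lll> s)"
    then show "s = m" using m seq_le_antisym by blast
  qed
  then show ?thesis using m by simp
qed

lemma K:
  assumes Y: "Y \<in> Obj C" and nz: "\<not> is_zero_obj C Y"
  shows "\<exists>S. indecomposable C S \<and> len S = 1 \<and> (S = Y \<or> proper_adm_sub C E S Y)"
proof -
  obtain xs where xs: "E_chain C E xs" "is_zero_obj C (hd xs)" "last xs = Y" "length xs - 1 = len Y"
    using len_attained[OF Y] by blast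
  have n1: "1 \<le> len Y" using nonzero_len[OF Y nz] .
  have L: "2 \<le> length xs" using n1 xs(4) by simp
  have ne: "xs \<noteq> []" using L by auto
  define S where "S = xs ! 1"
  have lastx: "last xs = xs ! (length xs - 1)" using ne by (simp add: last_conv_nth)
  have p01: "proper_adm_sub C E (xs!0) S" using chain_step[OF xs(1), of 0] L unfolding S_def by simp
  have So: "S \<in> Obj C" using psub_obj[OF p01] by blast
  have S1: "1 \<le> len S"
  proof -
    have c: "E_chain C E (take 2 xs)" using chain_take[OF xs(1)] by simp
    have "hd (take 2 xs) = hd xs" using ne by (cases xs) auto
    moreover have "last (take 2 xs) = S"
    proof -
      obtain a b rest where "xs = a#b#rest" using L by (cases xs; cases "tl xs") auto
      then show ?thesis unfolding S_def by simp
    qed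
    ultimately have "length (take 2 xs) - 1 \<le> len S" using len_ub[OF c] xs(2) by simp
    then show ?thesis using L by simp
  qed
  have S2: "len S \<le> 1"
  proof (cases "length xs = 2")
    case True
    then have "S = Y" unfolding S_def using lastx xs(3) by simp
    then show ?thesis using xs(4) True by simp
  next
    case False
    then have L3: "3 \<le> length xs" using L by simp
    obtain ys where ys: "E_chain C E ys" "is_zero_obj C (hd ys)" "last ys = S" "length ys - 1 = len S"
      using len_attained[OF So] by blast
    have yne: "ys \<noteq> []" using ys unfolding E_chain_def by blast
    have cd: "E_chain C E (drop 2 xs)" using chain_drop[OF xs(1)] L3 by simp
    have hdd: "hd (drop 2 xs) = xs ! 2" using L3 by (simp add: hd_drop_conv_nth)
    have "proper_adm_sub C E S (xs!2)" using chain_step[OF xs(1), of 1] L3 unfolding S_def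
      by (simp add: numeral_2_eq_2)
    then have c: "E_chain C E (ys @ drop 2 xs)" using chain_app[OF ys(1) cd] ys(3) hdd by simp
    have "hd (ys @ drop 2 xs) = hd ys" using yne by simp
    moreover have "last (ys @ drop 2 xs) = Y" using L3 xs(3) by simp
    ultimately have "length (ys @ drop 2 xs) - 1 \<le> len Y" using len_ub[OF c] ys(2) by simp
    then show ?thesis using ys(4) xs(4) L3 yne by simp
  qed
  have Slen: "len S = 1" using S1 S2 by simp
  have Snz: "\<not> is_zero_obj C S"
  proof
    assume Sz: "is_zero_obj C S"
    obtain i where i: "adm_monic C E (xs!0) S i" and ni: "\<not> is_iso C (xs!0) S i"
      using p01 unfolding proper_adm_sub_def by blast
    have "is_zero_obj C (xs!0)" using xs(2) ne by (simp add: hd_conv_nth)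
    then show False using zero_zero_iso Sz adm_obj[OF i] ni by blast
  qed
  have Sind: "indecomposable C S" unfolding indecomposable_def
  proof (intro conjI allI impI)
    fix X1 X2 i1 i2 p1 p2 assume bp: "is_biproduct C X1 X2 S i1 i2 p1 p2"
    show "is_zero_obj C X1 \<or> is_zero_obj C X2"
    proof (cases "is_iso C X1 S i1")
      case True then show ?thesis using split_iso[OF bp] by blast
    next
      case False
      then have "proper_adm_sub C E X1 S" using split_adm[OF bp] unfolding proper_adm_sub_def by blast
      then have "len X1 = 0" using len_strict Slen by fastforce
      then show ?thesis using len_zero_zero bip_objs[OF bp] by blast
    qed
  qed (use So Snz in auto)
  have "S = Y \<or> proper_adm_sub C E S Y"
  proof (cases "length xs = 2")
    case True
    then show ?thesis unfolding S_def using lastx xs(3) by simp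
  next
    case False
    then have L3: "3 \<le> length xs" using L by simp
    have "1 < length xs - 1" "length xs - 1 < length xs" using L3 by auto
    from chain_monic[OF xs(1) this] obtain i where "adm_monic C E (xs!1) (xs!(length xs - 1)) i" by blast
    then have i: "adm_monic C E S Y i" using lastx xs(3) unfolding S_def by simp
    have "\<not> is_iso C S Y i" using iso_len Slen xs(4) L3 by fastforce
    then show ?thesis using i unfolding proper_adm_sub_def by blast
  qed
  then show ?thesis using Sind Slen by blast
qed

lemma mu_len1:
  assumes S: "indecomposable C S" and l: "len S = 1"
  shows "GR_measure C E S = [1]"
proof -
  have m: "GR_measure C E S \<in> GR_seqs C E S" using mu[OF S] by blast
  from gr_props[OF S m] l show ?thesis
    by (cases "GR_measure C E S") auto
qed

lemma mu_head:
  assumes Y: "indecomposable C Y"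
  shows "GR_measure C E Y \<noteq> [] \<and> GR_measure C E Y ! 0 = 1"
proof -
  let ?m = "GR_measure C E Y"
  have m: "?m \<in> GR_seqs C E Y" and mx: "\<forall>t\<in>GR_seqs C E Y. t \<lll> ?m" using mu[OF Y] by blast+
  have pm: "?m \<noteq> [] \<and> last ?m = len Y \<and> length ?m \<le> len Y \<and> (\<forall>k<length ?m. 1 \<le> ?m!k \<and> ?m!k \<le> len Y)"
    using gr_props[OF Y m] .
  obtain S where S: "indecomposable C S" "len S = 1" "S = Y \<or> proper_adm_sub C E S Y"
    using K indec_obj[OF Y] by blast
  obtain t where t: "t \<in> GR_seqs C E Y" "t \<noteq> []" "t ! 0 = 1"
  proof (cases "S = Y")
    case True then show ?thesis using that gr_single[OF Y] S(2) by auto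
  next
    case False
    then have p: "proper_adm_sub C E S Y" using S by blast
    have "E_chain C E [S, Y]" using chain_append[OF chain_single] psub_obj[OF p] p by fastforce
    then have "[len S, len Y] = map len [S,Y] \<and> E_chain C E [S,Y] \<and> last [S,Y] = Y \<and> (\<forall>Z\<in>set [S,Y]. indecomposable C Z)"
      using S(1) Y by simp
    then have "[len S, len Y] \<in> GR_seqs C E Y" unfolding GR_seqs_def gr_map
      by (intro CollectI exI[of _ "[S,Y]"]) simp
    then show ?thesis using that S(2) by auto
  qed
  have tm: "t \<lll> ?m" using mx t by blast
  have m0: "1 \<le> ?m ! 0" using pm by auto
  have "?m ! 0 = 1"
    using tm unfolding seq_le_def
  proof (elim disjE conjE exE)
    assume "t = ?m" then show ?thesis using t by simp
  next
    assume "length t < length ?m" "take (length t) ?m = t"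
    then show ?thesis using t by (metis length_greater_0_conv nth_take)
  next
    fix i assume i: "i < min (length t) (length ?m)" and tk: "take i t = take i ?m" and gt: "?m ! i < t ! i"
    show ?thesis
    proof (cases "i = 0")
      case True then show ?thesis using gt t m0 by simp
    next
      case False
      then have "take i t ! 0 = t ! 0" "take i ?m ! 0 = ?m ! 0" by simp_all
      then show ?thesis using tk t by simp
    qed
  qed
  then show ?thesis using pm by blast
qed

lemma simple_iff_len1:
  assumes X: "indecomposable C X"
  shows "E_simple C E X \<longleftrightarrow> len X = 1"
proof
  assume sX: "E_simple C E X"
  obtain S where S: "indecomposable C S" "len S = 1" "S = X \<or> proper_adm_sub C E S X"
    using K indec_obj[OF X] by blast
  show "len X = 1"
  proof (cases "S = X")
    case True then show ?thesis using S by simp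
  next
    case False
    then obtain i where "adm_monic C E S X i" using S unfolding proper_adm_sub_def by blast
    then have "is_zero_obj C S \<or> isomorphic C S X" using sX unfolding E_simple_def by blast
    then have "isomorphic C S X" using indec_obj[OF S(1)] by blast
    then show ?thesis using iso_len S(2) unfolding isomorphic_def by metis
  qed
next
  assume l: "len X = 1"
  show "E_simple C E X" unfolding E_simple_def
  proof (intro conjI allI impI)
    fix A i assume i: "adm_monic C E A X i"
    show "is_zero_obj C A \<or> isomorphic C A X"
    proof (cases "is_iso C A X i")
      case True then show ?thesis unfolding isomorphic_def by blast
    next
      case False
      then have "proper_adm_sub C E A X" using i unfolding proper_adm_sub_def by blast
      then have "len A = 0" using len_strict l by fastforce
      then show ?thesis using len_zero_zero adm_obj[OF i] by blast
    qed
  qed (use indec_obj[OF X] in auto)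
qed

end

theorem proposition7p8:
  fixes C :: "('o,'m) addcat" and E :: "('o,'m) conflations"
  assumes "is_exact_category C E" and "E_finite C E"
  shows "(\<forall>X Y. indecomposable C X \<and> indecomposable C Y \<longrightarrow>
            GR_measure C E X \<lll> GR_measure C E Y \<or> GR_measure C E Y \<lll> GR_measure C E X)
       \<and> (\<forall>n::nat. finite {GR_measure C E X | X.
            indecomposable C X \<and> E_length C E X \<le> enat n})
       \<and> (\<forall>X. indecomposable C X \<longrightarrow>
            (E_simple C E X \<longleftrightarrow> (\<forall>Y. indecomposable C Y \<longrightarrow> GR_measure C E X \<lll> GR_measure C E Y)))"
proof -
  interpret exc C E using assms by unfold_locales
  show ?thesis
  proof (intro conjI allI impI)
    fix X Y
    show "GR_measure C E X \<lll> GR_measure C E Y \<or> GR_measure C E Y \<lll> GR_measure C E X"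
      using seq_le_total by blast
  next
    fix n :: nat
    have "{GR_measure C E X | X. indecomposable C X \<and> E_length C E X \<le> enat n}
          \<subseteq> {s. set s \<subseteq> {0..n} \<and> length s \<le> n}"
    proof
      fix s assume "s \<in> {GR_measure C E X | X. indecomposable C X \<and> E_length C E X \<le> enat n}"
      then obtain X where X: "indecomposable C X" "E_length C E X \<le> enat n" and s: "s = GR_measure C E X"
        by blast
      have "E_length C E X = enat (len X)" using len_fin indec_obj X(1) by blast
      then have ln: "len X \<le> n" using X(2) by simp
      have "s \<in> GR_seqs C E X" using mu[OF X(1)] s by blast
      from gr_props[OF X(1) this] have g1: "length s \<le> len X" and g2: "\<forall>k<length s. s!k \<le> len X"
        by blast+
      have "set s \<subseteq> {0..n}"
      proof
        fix x assume "x \<in> set s"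
        then obtain k where "k < length s" "s!k = x" by (auto simp: in_set_conv_nth)
        then show "x \<in> {0..n}" using g2 ln by fastforce
      qed
      then show "s \<in> {s. set s \<subseteq> {0..n} \<and> length s \<le> n}" using g1 ln by simp
    qed
    then show "finite {GR_measure C E X | X. indecomposable C X \<and> E_length C E X \<le> enat n}"
      using finite_lists_length_le[OF finite_atLeastAtMost, of 0 n n] finite_subset by blast
  next
    fix X assume X: "indecomposable C X"
    show "E_simple C E X \<longleftrightarrow> (\<forall>Y. indecomposable C Y \<longrightarrow> GR_measure C E X \<lll> GR_measure C E Y)"
    proof
      assume sx: "E_simple C E X"
      have l: "len X = 1" using simple_iff_len1[OF X] sx by simp
      have mX: "GR_measure C E X = [1]" using mu_len1[OF X l] .
      show "\<forall>Y. indecomposable C Y \<longrightarrow> GR_measure C E X \<lll> GR_measure C E Y"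
      proof (intro allI impI)
        fix Y assume Y: "indecomposable C Y"
        have h: "GR_measure C E Y \<noteq> [] \<and> GR_measure C E Y ! 0 = 1" by (rule mu_head[OF Y])
        obtain rest where mY: "GR_measure C E Y = 1 # rest"
        proof (cases "GR_measure C E Y")
          case Nil then show ?thesis using h by simp
        next
          case (Cons b r)
          then have "b = 1" using h by simp
          then show ?thesis using Cons that by simp
        qed
        show "GR_measure C E X \<lll> GR_measure C E Y"
          unfolding mX mY by (rule one_le)
      qed
    next
      assume all: "\<forall>Y. indecomposable C Y \<longrightarrow> GR_measure C E X \<lll> GR_measure C E Y"
      obtain S where S: "indecomposable C S" "len S = 1"
        using K indec_obj[OF X] by blast
      from all S(1) have "GR_measure C E X \<lll> GR_measure C E S" by blast
      then have le: "GR_measure C E X \<lll> [1]" using mu_len1[OF S] by simp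
      obtain a rest where mX: "GR_measure C E X = a # rest" using mu_head[OF X] by (cases "GR_measure C E X") auto
      have a: "a = 1" using mu_head[OF X] mX by simp
      have "rest = []" using le not_le_one unfolding mX a by blast
      then have "GR_measure C E X = [1]" using mX a by simp
      moreover have "last (GR_measure C E X) = len X" using gr_props[OF X] mu[OF X] by blast
      ultimately have "len X = 1" by simp
      then show "E_simple C E X" using simple_iff_len1[OF X] by blast
    qed
  qed
qed

end
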